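(* Let $(s_1,\dots,s_n)\in\{\pm1\}^n$ and let $T(\delta)$, $\delta>0$, be $\mathbb R^n$-valued Gaussian random vectors such that: (i) $T(\delta)$ has mean $0$ and positive-definite covariance matrix $C(\delta)$ with eigenvalues $\lambda_1(\delta),\dots,\lambda_n(\delta)>0$ and orthonormal eigenvectors $v_1(\delta),\dots,v_n(\delta)$; (ii) there is $\bar v_1\in\mathbb R^n$ with $v_1(\delta)\to\bar v_1$ as $\delta\to0$ and $s_j\bar v_{1j}>0$ for all $j$. Let $P(\delta)=\mathbb P\{s_jT_j(\delta)\ge0\text{ for all }j\}$. Then $$\limsup_{\delta\to0}P(\delta)\sqrt{\frac{\det C(\delta)}{\lambda_1(\delta)^n}}\le\frac{\Gamma(n/2)}{2\pi^{n/2}(n-1)!}\Big|\prod_{j=1}^n\bar v_{1j}\Big|^{-1}.$$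
   Context: No assumption is made that $\lambda_1(\delta)$ is the smallest eigenvalue; $\lambda_1(\delta)$ is any eigenvalue of $C(\delta)$ whose unit eigenvector $v_1(\delta)$ satisfies (ii). *)

theory Defs
  imports "HOL-Probability.Probability"
begin

definition gauss_density :: "real^'n^'n \<Rightarrow> real^'n \<Rightarrow> real" where
  "gauss_density C x =
     exp (- (x \<bullet> (matrix_inv C *v x)) / 2) / sqrt ((2 * pi) ^ CARD('n) * det C)"

definition pos_def_matrix :: "real^'n^'n \<Rightarrow> bool" where
  "pos_def_matrix C \<longleftrightarrow> transpose C = C \<and> (\<forall>x. x \<noteq> 0 \<longrightarrow> x \<bullet> (C *v x) > 0)"

end

theory Submission
  imports Defs
begin

lemma nn_exp_tail:
  fixes c :: real
  shows "(\<integral>\<^sup>+u. ennreal (indicator {c..} u * exp (- u)) \<partial>lborel) = ennreal (exp (- c))"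
  using nn_integral_has_integral_lebesgue[OF _ has_integral_exp_minus_to_infinity[of 1 c]]
  by simp

lemma emeasure_simplex_t:
  fixes t :: real
  assumes "t \<ge> 0"
  shows "emeasure lborel {x::'a::euclidean_space. (\<forall>i\<in>Basis. 0 \<le> x \<bullet> i) \<and> sum ((\<bullet>) x) Basis \<le> t}
         = ennreal (t ^ DIM('a) / fact DIM('a))"
proof -
  have "emeasure lborel {x::'a. (\<forall>i\<in>Basis. 0 \<le> x \<bullet> i) \<and> sum ((\<bullet>) x) Basis \<le> t} =
               emeasure (distr (Pi\<^sub>M Basis (\<lambda>b. lborel)) borel (\<lambda>f. \<Sum>b\<in>Basis. f b *\<^sub>R b))
                 {x::'a. (\<forall>i\<in>Basis. 0 \<le> x \<bullet> i) \<and> sum ((\<bullet>) x) Basis \<le> t}"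
    by (subst lborel_eq) simp
  also have "\<dots> = emeasure (Pi\<^sub>M Basis (\<lambda>b. lborel))
                    ({y::'a \<Rightarrow> real. (\<forall>i\<in>Basis. 0 \<le> y i) \<and> sum y Basis \<le> t} \<inter>
                      space (Pi\<^sub>M Basis (\<lambda>b. lborel)))"
    by (subst emeasure_distr) auto
  also have "\<dots> = ennreal (t ^ DIM('a) / fact DIM('a))"
    by (subst emeasure_std_simplex_aux) (use assms in auto)
  finally show ?thesis .
qed

lemma sqrt_pow_powr:
  fixes u :: real assumes "u \<ge> 0" "n \<ge> 1"
  shows "sqrt (2*u) ^ n = 2 powr (real n / 2) * u powr (real n / 2)"
proof (cases "u = 0")
  case True then show ?thesis using assms by simp
next
  case False
  then have "u > 0" using assms by simp
  have "sqrt (2*u) ^ n = ((2*u) powr (1/2)) ^ n" using \<open>u>0\<close> by (simp add: powr_half_sqrt)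
  also have "\<dots> = (2*u) powr (real n / 2)" using \<open>u>0\<close>
    by (simp add: powr_realpow[symmetric] powr_powr)
  also have "\<dots> = 2 powr (real n / 2) * u powr (real n / 2)" using \<open>u>0\<close> by (simp add: powr_mult)
  finally show ?thesis .
qed

lemma J_value:
  shows "(\<integral>\<^sup>+y. ennreal (if (\<forall>b\<in>Basis. 0 \<le> y \<bullet> b) then exp (- (\<Sum>b\<in>Basis. y \<bullet> b)\<^sup>2 / 2) else 0) \<partial>(lborel::'a::euclidean_space measure))
     = ennreal (2 powr (real DIM('a) / 2) * Gamma (real DIM('a) / 2 + 1) / fact DIM('a))"
proof -
  define n where "n = DIM('a)"
  have n1: "n \<ge> 1" unfolding n_def by (simp add: DIM_positive Suc_leI)
  define F where "F = (\<lambda>(y::'a) (u::real). ennreal (if (\<forall>b\<in>Basis. 0 \<le> y \<bullet> b) \<and> (\<Sum>b\<in>Basis. y \<bullet> b)\<^sup>2 / 2 \<le> u then exp (- u) else 0))"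
  have Fm: "case_prod F \<in> borel_measurable (lborel \<Otimes>\<^sub>M lborel)"
    unfolding F_def by measurable
  have step1: "ennreal (if (\<forall>b\<in>Basis. 0 \<le> y \<bullet> b) then exp (- (\<Sum>b\<in>Basis. y \<bullet> b)\<^sup>2 / 2) else 0)
      = (\<integral>\<^sup>+u. F y u \<partial>lborel)" for y
  proof (cases "\<forall>b\<in>Basis. 0 \<le> y \<bullet> b")
    case True
    have "(\<integral>\<^sup>+u. F y u \<partial>lborel) = (\<integral>\<^sup>+u. ennreal (indicator {(\<Sum>b\<in>Basis. y \<bullet> b)\<^sup>2 / 2..} u * exp (- u)) \<partial>lborel)"
      unfolding F_def using True by (intro nn_integral_cong) (auto simp: indicator_def)
    also have "\<dots> = ennreal (exp (- ((\<Sum>b\<in>Basis. y \<bullet> b)\<^sup>2 / 2)))" by (rule nn_exp_tail)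
    finally show ?thesis using True by simp
  next
    case False
    then have "F y u = 0" for u unfolding F_def by auto
    then show ?thesis using False by simp
  qed
  have step2: "(\<integral>\<^sup>+y. F y u \<partial>lborel) = ennreal (indicator {0..} u * u powr (real n / 2) / exp u * (2 powr (real n / 2) / fact n))" for u
  proof (cases "u \<ge> 0")
    case True
    define S where "S = {x::'a. (\<forall>i\<in>Basis. 0 \<le> x \<bullet> i) \<and> sum ((\<bullet>) x) Basis \<le> sqrt (2*u)}"
    have Sm: "S \<in> sets lborel" unfolding S_def by measurable
    have "(\<integral>\<^sup>+y. F y u \<partial>lborel) = (\<integral>\<^sup>+y. ennreal (exp (-u)) * indicator S y \<partial>lborel)"
    proof (intro nn_integral_cong)
      fix y :: 'a
      have "((\<forall>b\<in>Basis. 0 \<le> y \<bullet> b) \<and> (\<Sum>b\<in>Basis. y \<bullet> b)\<^sup>2 / 2 \<le> u) \<longleftrightarrow> y \<in> S"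
      proof
        assume a: "(\<forall>b\<in>Basis. 0 \<le> y \<bullet> b) \<and> (\<Sum>b\<in>Basis. y \<bullet> b)\<^sup>2 / 2 \<le> u"
        then have "(\<Sum>b\<in>Basis. y \<bullet> b)\<^sup>2 \<le> 2*u" by simp
        then have "sqrt ((\<Sum>b\<in>Basis. y \<bullet> b)\<^sup>2) \<le> sqrt (2*u)" by (rule real_sqrt_le_mono)
        moreover have "0 \<le> (\<Sum>b\<in>Basis. y \<bullet> b)" using a by (intro sum_nonneg) auto
        ultimately show "y \<in> S" using a unfolding S_def by simp
      next
        assume "y \<in> S"
        then have a: "\<forall>b\<in>Basis. 0 \<le> y \<bullet> b" and b: "(\<Sum>b\<in>Basis. y \<bullet> b) \<le> sqrt (2*u)" unfolding S_def by auto
        have "0 \<le> (\<Sum>b\<in>Basis. y \<bullet> b)" using a by (intro sum_nonneg) auto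
        then have "(\<Sum>b\<in>Basis. y \<bullet> b)\<^sup>2 \<le> (sqrt (2*u))\<^sup>2" using b by (intro power_mono) auto
        then show "(\<forall>b\<in>Basis. 0 \<le> y \<bullet> b) \<and> (\<Sum>b\<in>Basis. y \<bullet> b)\<^sup>2 / 2 \<le> u" using a True by simp
      qed
      then show "F y u = ennreal (exp (-u)) * indicator S y" unfolding F_def by (simp add: indicator_def)
    qed
    also have "\<dots> = ennreal (exp (-u)) * emeasure lborel S" using Sm by (rule nn_integral_cmult_indicator)
    also have "emeasure lborel S = ennreal (sqrt (2*u) ^ n / fact n)"
      unfolding S_def n_def by (rule emeasure_simplex_t) (use True in simp)
    also have "ennreal (exp (-u)) * ennreal (sqrt (2*u) ^ n / fact n)
        = ennreal (indicator {0..} u * u powr (real n / 2) / exp u * (2 powr (real n / 2) / fact n))"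
      using True n1 sqrt_pow_powr[OF True n1] by (subst ennreal_mult[symmetric]) (auto simp: exp_minus field_simps)
    finally show ?thesis .
  next
    case False
    then have "F y u = 0" for y
    proof -
      have "0 \<le> (\<Sum>b\<in>Basis. y \<bullet> b)\<^sup>2 / 2" by simp
      then have "\<not> (\<Sum>b\<in>Basis. y \<bullet> b)\<^sup>2 / 2 \<le> u" using False by linarith
      then show ?thesis unfolding F_def by auto
    qed
    then show ?thesis using False by simp
  qed
  have "(\<integral>\<^sup>+y. ennreal (if (\<forall>b\<in>Basis. 0 \<le> y \<bullet> b) then exp (- (\<Sum>b\<in>Basis. y \<bullet> b)\<^sup>2 / 2) else 0) \<partial>(lborel::'a measure))
      = (\<integral>\<^sup>+y. (\<integral>\<^sup>+u. F y u \<partial>lborel) \<partial>lborel)" by (simp add: step1)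
  also have "\<dots> = (\<integral>\<^sup>+u. (\<integral>\<^sup>+y. F y u \<partial>lborel) \<partial>lborel)"
    using Fm by (rule lborel_pair.Fubini'[symmetric])
  also have "\<dots> = (\<integral>\<^sup>+u. ennreal (indicator {0..} u * u powr (real n / 2) / exp u) * ennreal (2 powr (real n / 2) / fact n) \<partial>lborel)"
    by (simp only: step2, intro nn_integral_cong, subst ennreal_mult[symmetric]) auto
  also have "\<dots> = (\<integral>\<^sup>+u. ennreal (indicator {0..} u * u powr (real n / 2) / exp u) \<partial>lborel) * ennreal (2 powr (real n / 2) / fact n)"
    by (rule nn_integral_multc) measurable
  also have "(\<integral>\<^sup>+u. ennreal (indicator {0..} u * u powr (real n / 2) / exp u) \<partial>lborel) = ennreal (Gamma (real n / 2 + 1))"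
    using Gamma_conv_nn_integral_real[of "real n / 2 + 1"] by simp
  finally show ?thesis unfolding n_def
    by (simp add: ennreal_mult''[symmetric] Gamma_real_pos)
qed

lemma orthant_integral:
  fixes s a :: "'a::euclidean_space" and lam :: real
  assumes lam: "lam > 0" and sa: "\<forall>b\<in>Basis. (s \<bullet> b) * (a \<bullet> b) > 0"
  shows "(\<integral>\<^sup>+x. ennreal (if (\<forall>b\<in>Basis. 0 \<le> (s \<bullet> b) * (x \<bullet> b)) then exp (- (a \<bullet> x)\<^sup>2 / (2 * lam)) else 0) \<partial>lborel)
    = ennreal (sqrt lam ^ DIM('a) / (\<Prod>b\<in>Basis. \<bar>a \<bullet> b\<bar>) * (2 powr (real DIM('a) / 2) * Gamma (real DIM('a) / 2 + 1) / fact DIM('a)))"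
proof -
  define c where "c = (\<lambda>b. sqrt lam / (a \<bullet> b))"
  define T where "T = (\<lambda>y::'a. 0 + (\<Sum>j\<in>Basis. (c j * (y \<bullet> j)) *\<^sub>R j))"
  define f where "f = (\<lambda>x::'a. ennreal (if (\<forall>b\<in>Basis. 0 \<le> (s \<bullet> b) * (x \<bullet> b)) then exp (- (a \<bullet> x)\<^sup>2 / (2 * lam)) else 0))"
  define g where "g = (\<lambda>y::'a. ennreal (if (\<forall>b\<in>Basis. 0 \<le> y \<bullet> b) then exp (- (\<Sum>b\<in>Basis. y \<bullet> b)\<^sup>2 / 2) else 0))"
  have anz: "a \<bullet> b \<noteq> 0" if "b \<in> Basis" for b using sa that by fastforce
  have cnz: "c j \<noteq> 0" if "j \<in> Basis" for j using anz[OF that] lam unfolding c_def by simp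
  have eq: "lborel = density (distr lborel borel T) (\<lambda>_. (\<Prod>j\<in>Basis. \<bar>c j\<bar>))"
    unfolding T_def by (rule lborel_affine_euclidean) (use cnz in auto)
  have Tm[measurable]: "T \<in> borel \<rightarrow>\<^sub>M borel" unfolding T_def by measurable
  have fm[measurable]: "f \<in> borel_measurable borel" unfolding f_def by measurable
  have Tb: "T y \<bullet> b = c b * (y \<bullet> b)" if "b \<in> Basis" for y b
    using that unfolding T_def by (simp add: inner_sum_left inner_Basis if_distrib cong: if_cong)
  have fT: "f (T y) = g y" for y
  proof -
    have 1: "(\<forall>b\<in>Basis. 0 \<le> (s \<bullet> b) * (T y \<bullet> b)) \<longleftrightarrow> (\<forall>b\<in>Basis. 0 \<le> y \<bullet> b)"
    proof -
      have "0 \<le> (s \<bullet> b) * (T y \<bullet> b) \<longleftrightarrow> 0 \<le> y \<bullet> b" if b: "b \<in> Basis" for b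
      proof -
        have "(s \<bullet> b) * c b = sqrt lam * ((s \<bullet> b) * (a \<bullet> b)) / (a \<bullet> b)^2"
          unfolding c_def using anz[OF b] by (simp add: field_simps power2_eq_square)
        moreover have "sqrt lam * ((s \<bullet> b) * (a \<bullet> b)) / (a \<bullet> b)^2 > 0"
          by (rule divide_pos_pos[OF mult_pos_pos]) (use sa b lam anz[OF b] in auto)
        ultimately have "(s \<bullet> b) * c b > 0" by simp
        then have "0 \<le> ((s \<bullet> b) * c b) * (y \<bullet> b) \<longleftrightarrow> 0 \<le> y \<bullet> b"
          using mult_le_cancel_left_pos[of "s \<bullet> b * c b" 0 "y \<bullet> b"] \<open>(s \<bullet> b) * c b > 0\<close> by simp
        then show ?thesis using Tb[OF b] by (simp add: mult.assoc)
      qed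
      then show ?thesis by auto
    qed
    have 2: "a \<bullet> T y = sqrt lam * (\<Sum>b\<in>Basis. y \<bullet> b)"
    proof -
      have "a \<bullet> T y = (\<Sum>b\<in>Basis. (a \<bullet> b) * (T y \<bullet> b))" by (rule euclidean_inner)
      also have "\<dots> = (\<Sum>b\<in>Basis. sqrt lam * (y \<bullet> b))"
        by (intro sum.cong refl) (simp add: Tb c_def anz)
      finally show ?thesis by (simp add: sum_distrib_left)
    qed
    have 3: "- (a \<bullet> T y)\<^sup>2 / (2 * lam) = - (\<Sum>b\<in>Basis. y \<bullet> b)\<^sup>2 / 2"
      unfolding 2 using lam by (simp add: power_mult_distrib)
    show ?thesis unfolding f_def g_def 1 3 ..
  qed
  have "(\<integral>\<^sup>+x. f x \<partial>lborel) = (\<integral>\<^sup>+x. f x \<partial>density (distr lborel borel T) (\<lambda>_. (\<Prod>j\<in>Basis. \<bar>c j\<bar>)))"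
    using eq by (rule arg_cong)
  also have "\<dots> = (\<integral>\<^sup>+x. ennreal (\<Prod>j\<in>Basis. \<bar>c j\<bar>) * f x \<partial>distr lborel borel T)"
    by (subst nn_integral_density) auto
  also have "\<dots> = (\<integral>\<^sup>+y. ennreal (\<Prod>j\<in>Basis. \<bar>c j\<bar>) * f (T y) \<partial>lborel)"
    by (subst nn_integral_distr) auto
  also have "\<dots> = ennreal (\<Prod>j\<in>Basis. \<bar>c j\<bar>) * (\<integral>\<^sup>+y. g y \<partial>lborel)"
    unfolding fT by (rule nn_integral_cmult) (unfold g_def, measurable)
  also have "(\<integral>\<^sup>+y. g y \<partial>lborel) = ennreal (2 powr (real DIM('a) / 2) * Gamma (real DIM('a) / 2 + 1) / fact DIM('a))"
    unfolding g_def by (rule J_value)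
  also have "(\<Prod>j\<in>Basis. \<bar>c j\<bar>) = sqrt lam ^ DIM('a) / (\<Prod>b\<in>Basis. \<bar>a \<bullet> b\<bar>)"
    unfolding c_def using lam by (simp add: prod_dividef abs_div prod_constant)
  finally have R: "(\<integral>\<^sup>+x. f x \<partial>lborel) = ennreal (sqrt lam ^ DIM('a) / (\<Prod>b\<in>Basis. \<bar>a \<bullet> b\<bar>))
     * ennreal (2 powr (real DIM('a) / 2) * Gamma (real DIM('a) / 2 + 1) / fact DIM('a))" .
  have A: "0 \<le> sqrt lam ^ DIM('a) / (\<Prod>b\<in>Basis. \<bar>a \<bullet> b\<bar>)"
    by (intro divide_nonneg_nonneg prod_nonneg) (use lam in auto)
  have "Gamma (real DIM('a) / 2 + 1) > 0" by (rule Gamma_real_pos) simp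
  then have B: "0 \<le> 2 powr (real DIM('a) / 2) * Gamma (real DIM('a) / 2 + 1) / fact DIM('a)" by simp
  show ?thesis using R unfolding f_def ennreal_mult[OF A B] .
qed

lemma quad_bound:
  fixes C :: "real^'n^'n" and v x :: "real^'n" and lam :: real
  assumes pd: "pos_def_matrix C" and inv: "invertible C"
    and eig: "C *v v = lam *\<^sub>R v" and nv: "norm v = 1"
  shows "lam > 0" and "(v \<bullet> x)\<^sup>2 \<le> lam * (x \<bullet> (matrix_inv C *v x))"
proof -
  define B where "B = matrix_inv C"
  have CB: "C ** B = mat 1" and BC: "B ** C = mat 1"
    using someI_ex[OF inv[unfolded invertible_def]] unfolding B_def matrix_inv_def by auto
  have sym: "transpose C = C" and pos: "\<And>z. z \<noteq> 0 \<Longrightarrow> z \<bullet> (C *v z) > 0"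
    using pd unfolding pos_def_matrix_def by auto
  have vv: "v \<bullet> v = 1" using nv by (simp add: norm_eq_1)
  have v0: "v \<noteq> 0" using nv by auto
  have "v \<bullet> (C *v v) = lam" using eig vv by simp
  with pos[OF v0] show lp: "lam > 0" by simp
  have Bv: "B *v v = (1/lam) *\<^sub>R v"
  proof -
    have "B *v (C *v v) = v" by (simp add: matrix_vector_mul_assoc BC)
    then have "lam *\<^sub>R (B *v v) = v" using eig by (simp add: matrix_vector_mult_scaleR)
    then show ?thesis using lp by (metis scaleR_scaleR divide_inverse_commute mult.commute right_inverse scaleR_one less_irrefl divide_self_if)
  qed
  have CBw: "C *v (B *v w) = w" for w by (simp add: matrix_vector_mul_assoc CB)
  have trC: "(C *v z) \<bullet> y = z \<bullet> (C *v y)" for z y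
  proof -
    have "(C *v z) \<bullet> y = (z v* transpose C) \<bullet> y" by simp
    also have "\<dots> = z \<bullet> (transpose C *v y)" by (rule dot_lmul_matrix)
    finally show ?thesis using sym by simp
  qed
  have qnn: "w \<bullet> (B *v w) \<ge> 0" for w
  proof -
    define z where "z = B *v w"
    have "w = C *v z" unfolding z_def using CBw by simp
    then have "w \<bullet> (B *v w) = (C *v z) \<bullet> z" unfolding z_def by simp
    also have "\<dots> = z \<bullet> (C *v z)" by (simp add: inner_commute)
    finally show ?thesis using pos[of z] by (cases "z = 0") auto
  qed
  have xBv: "x \<bullet> (B *v v) = (x \<bullet> v) / lam" using Bv by simp
  have vBx: "v \<bullet> (B *v x) = (x \<bullet> v) / lam"
  proof -
    define z where "z = B *v x"
    have "x \<bullet> v = (C *v z) \<bullet> v" unfolding z_def using CBw by simp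
    also have "\<dots> = z \<bullet> (C *v v)" by (rule trC)
    also have "\<dots> = lam * (v \<bullet> z)" using eig by (simp add: inner_commute)
    finally show ?thesis unfolding z_def using lp by simp
  qed
  define t where "t = x \<bullet> v"
  have "0 \<le> (x - t *\<^sub>R v) \<bullet> (B *v (x - t *\<^sub>R v))" by (rule qnn)
  also have "\<dots> = x \<bullet> (B *v x) - t * (x \<bullet> (B *v v)) - t * (v \<bullet> (B *v x)) + t * t * (v \<bullet> (B *v v))"
    by (simp add: matrix_vector_mult_diff_distrib matrix_vector_mult_scaleR inner_diff_left inner_diff_right algebra_simps)
  also have "\<dots> = x \<bullet> (B *v x) - t\<^sup>2 / lam"
    unfolding xBv vBx Bv t_def using vv lp by (simp add: field_simps power2_eq_square)
  finally have "t\<^sup>2 / lam \<le> x \<bullet> (B *v x)" by simp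
  then have "t\<^sup>2 \<le> lam * (x \<bullet> (B *v x))" using lp by (simp add: field_simps)
  then show "(v \<bullet> x)\<^sup>2 \<le> lam * (x \<bullet> (matrix_inv C *v x))" unfolding t_def B_def by (simp add: inner_commute)
qed

lemma vec_ball_Basis:
  fixes P :: "real^'n \<Rightarrow> bool"
  shows "(\<forall>b\<in>Basis. P b) \<longleftrightarrow> (\<forall>j. P (axis j 1))"
  by (auto simp: Basis_vec_def)

lemma vec_prod_Basis:
  fixes f :: "real^'n \<Rightarrow> real"
  shows "(\<Prod>b\<in>Basis. f b) = (\<Prod>j\<in>UNIV. f (axis j 1))"
proof -
  have B: "Basis = (\<lambda>j. axis j (1::real)) ` (UNIV :: 'n set)" by (auto simp: Basis_vec_def)
  have I: "inj (\<lambda>j. axis j (1::real) :: real^'n)" by (auto simp: inj_def axis_eq_axis)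
  show ?thesis unfolding B using prod.reindex[OF I, of f] by (simp add: comp_def)
qed

lemma const_identity:
  assumes "n \<ge> 1"
  shows "2 powr (real n / 2) * Gamma (real n / 2 + 1) / fact n / sqrt ((2 * pi) ^ n)
       = Gamma (real n / 2) / (2 * pi powr (real n / 2) * fact (n - 1))"
proof -
  have s: "sqrt ((2 * pi) ^ n) = 2 powr (real n / 2) * pi powr (real n / 2)"
  proof -
    have a: "sqrt ((2 * pi) ^ n) = ((2*pi) ^ n) powr (1/2)" by (simp add: powr_half_sqrt)
    have b: "(2*pi) ^ n = (2*pi) powr (real n)" by (rule powr_realpow[symmetric]) simp
    have c: "((2*pi) powr (real n)) powr (1/2) = (2*pi) powr (real n / 2)" by (simp only: powr_powr) simp
    have d: "(2*pi) powr (real n / 2) = 2 powr (real n / 2) * pi powr (real n / 2)" by (simp add: powr_mult)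
    have "sqrt ((2*pi)^n) = ((2*pi) powr (real n)) powr (1/2)" by (subst a, subst b, rule refl)
    also note c
    also note d
    finally show ?thesis .
  qed
  have g: "Gamma (real n / 2 + 1) = (real n / 2) * Gamma (real n / 2)"
    by (rule Gamma_plus1) (use nonpos_Ints_nonpos[of "real n / 2"] assms in fastforce)
  have f: "(fact n :: real) = real n * fact (n - 1)"
    using assms by (cases n) auto
  have "(fact (n-1) :: real) > 0" by simp
  moreover have "real n > 0" using assms by simp
  moreover have "\<And>A Bp F N G :: real. A > 0 \<Longrightarrow> Bp > 0 \<Longrightarrow> F > 0 \<Longrightarrow> N > 0 \<Longrightarrow>
     A * (N / 2 * G) / (N * F) / (A * Bp) = G / (2 * Bp * F)" by (simp add: field_simps)
  ultimately show ?thesis unfolding s g f by simp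
qed

lemma per_delta:
  fixes s :: "real^'n" and M :: "'a measure" and T :: "'a \<Rightarrow> real^'n"
    and C :: "real^'n^'n" and lam :: real and v :: "real^'n"
  assumes P: "prob_space M" and pd: "pos_def_matrix C"
    and gauss: "distributed M lborel T (\<lambda>x. ennreal (gauss_density C x))"
    and eig: "C *v v = lam *\<^sub>R v" and nv: "norm v = 1"
    and sv: "\<forall>j. s $ j * v $ j > 0"
  shows "measure M {\<omega> \<in> space M. \<forall>j. s $ j * T \<omega> $ j \<ge> 0} * sqrt (det C / lam ^ CARD('n))
     \<le> Gamma (real CARD('n) / 2) / (2 * pi powr (real CARD('n) / 2) * fact (CARD('n) - 1))
                  * inverse \<bar>\<Prod>j\<in>UNIV. v $ j\<bar>"
proof -
  interpret prob_space M by (rule P)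
  define n where "n = CARD('n)"
  have n1: "n \<ge> 1" unfolding n_def by (simp add: Suc_leI)
  define K where "K = Gamma (real n / 2) / (2 * pi powr (real n / 2) * fact (n - 1))"
  have Kpos: "K > 0" unfolding K_def using n1 by (auto intro!: Gamma_real_pos)
  have vnz: "v $ j \<noteq> 0" for j using sv[rule_format, of j] by auto
  have Pi_pos: "\<bar>\<Prod>j\<in>UNIV. v $ j\<bar> > 0" using vnz by (simp add: prod_zero_iff)
  have RHSpos: "K * inverse \<bar>\<Prod>j\<in>UNIV. v $ j\<bar> > 0" using Kpos Pi_pos by simp
  define Pr where "Pr = measure M {\<omega> \<in> space M. \<forall>j. s $ j * T \<omega> $ j \<ge> 0}"
  have Pr0: "Pr \<ge> 0" unfolding Pr_def by simp
  have inv: "invertible C" if "det C \<noteq> 0" using that by (simp add: invertible_det_nz)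
  have vv: "v \<bullet> v = 1" using nv by (simp add: norm_eq_1)
  have "v \<noteq> 0" using nv by auto
  then have "0 < v \<bullet> (C *v v)" using pd unfolding pos_def_matrix_def by auto
  then have lp: "lam > 0" using eig vv by simp
  show ?thesis
  proof (cases "det C > 0")
    case False
    have "det C / lam ^ CARD('n) \<le> 0" using False lp by (simp add: divide_nonpos_pos)
    then have "sqrt (det C / lam ^ CARD('n)) \<le> 0" by simp
    then have "Pr * sqrt (det C / lam ^ CARD('n)) \<le> 0" using Pr0 by (simp add: mult_nonneg_nonpos)
    then show ?thesis using RHSpos unfolding Pr_def K_def n_def by linarith
  next
    case True
    note Cinv = inv[OF less_imp_neq[OF True, symmetric]]
    define S where "S = (2 * pi) ^ n * det C"
    have Spos: "S > 0" unfolding S_def using True by simp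
    define Jc where "Jc = 2 powr (real n / 2) * Gamma (real n / 2 + 1) / fact n"
    define Pv where "Pv = (\<Prod>b\<in>Basis. \<bar>v \<bullet> b\<bar>)"
    have Pv_eq: "Pv = \<bar>\<Prod>j\<in>UNIV. v $ j\<bar>"
      unfolding Pv_def vec_prod_Basis by (simp add: inner_axis abs_prod)
    define Orth where "Orth = {x::real^'n. \<forall>j. 0 \<le> s $ j * x $ j}"
    have Om: "Orth \<in> sets lborel" unfolding Orth_def by measurable
    have seteq: "{\<omega> \<in> space M. \<forall>j. s $ j * T \<omega> $ j \<ge> 0} = T -` Orth \<inter> space M"
      unfolding Orth_def by auto
    have sb: "\<forall>b\<in>Basis. (s \<bullet> b) * (v \<bullet> b) > 0"
      unfolding vec_ball_Basis using sv by (simp add: inner_axis)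
    have cond: "(\<forall>b\<in>Basis. 0 \<le> (s \<bullet> b) * (x \<bullet> b)) \<longleftrightarrow> x \<in> Orth" for x
      unfolding vec_ball_Basis Orth_def by (simp add: inner_axis)
    have "ennreal Pr = emeasure M (T -` Orth \<inter> space M)"
      unfolding Pr_def seteq by (simp add: emeasure_eq_measure)
    also have "\<dots> = (\<integral>\<^sup>+x. ennreal (gauss_density C x) * indicator Orth x \<partial>lborel)"
      by (rule distributed_emeasure[OF gauss Om])
    also have "\<dots> \<le> (\<integral>\<^sup>+x. ennreal (if (\<forall>b\<in>Basis. 0 \<le> (s \<bullet> b) * (x \<bullet> b)) then exp (- (v \<bullet> x)\<^sup>2 / (2 * lam)) else 0) * ennreal (1 / sqrt S) \<partial>lborel)"
    proof (intro nn_integral_mono)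
      fix x :: "real^'n"
      show "ennreal (gauss_density C x) * indicator Orth x
         \<le> ennreal (if (\<forall>b\<in>Basis. 0 \<le> (s \<bullet> b) * (x \<bullet> b)) then exp (- (v \<bullet> x)\<^sup>2 / (2 * lam)) else 0) * ennreal (1 / sqrt S)"
      proof (cases "x \<in> Orth")
        case False then show ?thesis by simp
      next
        case True
        have q: "(v \<bullet> x)\<^sup>2 \<le> lam * (x \<bullet> (matrix_inv C *v x))" by (rule quad_bound(2)[OF pd Cinv eig nv])
        then have "- (x \<bullet> (matrix_inv C *v x)) / 2 \<le> - (v \<bullet> x)\<^sup>2 / (2 * lam)"
          using lp by (simp add: field_simps)
        then have "gauss_density C x \<le> exp (- (v \<bullet> x)\<^sup>2 / (2 * lam)) * (1 / sqrt S)"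
          unfolding gauss_density_def S_def[symmetric] n_def[symmetric] using Spos
          by (simp add: divide_right_mono)
        then have "ennreal (gauss_density C x) \<le> ennreal (exp (- (v \<bullet> x)\<^sup>2 / (2 * lam)) * (1 / sqrt S))"
          by (rule ennreal_leI)
        also have "\<dots> = ennreal (exp (- (v \<bullet> x)\<^sup>2 / (2 * lam))) * ennreal (1 / sqrt S)"
          by (rule ennreal_mult) (use Spos in auto)
        finally show ?thesis using True cond[of x] by simp
      qed
    qed
    also have "\<dots> = (\<integral>\<^sup>+x. ennreal (if (\<forall>b\<in>Basis. 0 \<le> (s \<bullet> b) * (x \<bullet> b)) then exp (- (v \<bullet> x)\<^sup>2 / (2 * lam)) else 0) \<partial>lborel) * ennreal (1 / sqrt S)"
      by (rule nn_integral_multc) measurable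
    also have "\<dots> = ennreal (sqrt lam ^ n / Pv * Jc) * ennreal (1 / sqrt S)"
      unfolding Pv_def Jc_def n_def using orthant_integral[OF lp sb] by simp
    also have "\<dots> = ennreal (sqrt lam ^ n / Pv * Jc / sqrt S)"
      using lp Spos by (subst ennreal_mult[symmetric]) (auto simp: Pv_def Jc_def intro!: divide_nonneg_nonneg prod_nonneg less_imp_le[OF Gamma_real_pos] mult_nonneg_nonneg)
    finally have Prle: "Pr \<le> sqrt lam ^ n / Pv * Jc / sqrt S"
      using Spos lp by (subst (asm) ennreal_le_iff) (auto simp: Pv_def Jc_def intro!: divide_nonneg_nonneg prod_nonneg less_imp_le[OF Gamma_real_pos] mult_nonneg_nonneg)
    have sq: "sqrt (det C / lam ^ n) = sqrt (det C) / sqrt lam ^ n"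
      by (simp add: real_sqrt_divide real_sqrt_power)
    have sS: "sqrt S = sqrt ((2 * pi) ^ n) * sqrt (det C)" unfolding S_def by (simp add: real_sqrt_mult)
    have "Pr * sqrt (det C / lam ^ n) \<le> sqrt lam ^ n / Pv * Jc / sqrt S * sqrt (det C / lam ^ n)"
      using Prle by (rule mult_right_mono) (intro real_sqrt_ge_zero divide_nonneg_pos, use True lp in auto)
    also have "\<dots> = Jc / sqrt ((2 * pi) ^ n) / Pv"
    proof -
      have gen: "\<And>a P J q d :: real. a > 0 \<Longrightarrow> P > 0 \<Longrightarrow> q > 0 \<Longrightarrow> d > 0 \<Longrightarrow>
          a / P * J / (q * d) * (d / a) = J / q / P" by (simp add: field_simps)
      have "sqrt lam ^ n > 0" using lp by simp
      moreover have "Pv > 0" using Pi_pos Pv_eq by simp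
      moreover have "sqrt ((2 * pi) ^ n) > 0" by simp
      moreover have "sqrt (det C) > 0" using True by simp
      ultimately show ?thesis unfolding sq sS by (rule gen)
    qed
    also have "Jc / sqrt ((2 * pi) ^ n) = K" unfolding Jc_def K_def by (rule const_identity[OF n1])
    finally have "Pr * sqrt (det C / lam ^ n) \<le> K * inverse Pv" by (simp only: divide_inverse)
    then show ?thesis unfolding Pv_eq Pr_def K_def n_def .
  qed
qed

theorem proposition4p2:
  fixes s :: "real^'n"
    and M :: "real \<Rightarrow> 'a measure"
    and T :: "real \<Rightarrow> 'a \<Rightarrow> real^'n"
    and C :: "real \<Rightarrow> real^'n^'n"
    and lam1 :: "real \<Rightarrow> real"
    and v1 :: "real \<Rightarrow> real^'n"
    and vbar :: "real^'n"
  assumes s_sign: "\<forall>j. s $ j = 1 \<or> s $ j = -1"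
    and prob: "\<forall>\<delta>>0. prob_space (M \<delta>)"
    and posdef: "\<forall>\<delta>>0. pos_def_matrix (C \<delta>)"
    and gauss: "\<forall>\<delta>>0. distributed (M \<delta>) lborel (T \<delta>) (\<lambda>x. ennreal (gauss_density (C \<delta>) x))"
    and eig: "\<forall>\<delta>>0. C \<delta> *v v1 \<delta> = lam1 \<delta> *\<^sub>R v1 \<delta> \<and> norm (v1 \<delta>) = 1"
    and lim: "(v1 \<longlongrightarrow> vbar) (at_right 0)"
    and vbar_sign: "\<forall>j. s $ j * vbar $ j > 0"
  shows "Limsup (at_right 0)
           (\<lambda>\<delta>. ereal (measure (M \<delta>) {\<omega> \<in> space (M \<delta>). \<forall>j. s $ j * T \<delta> \<omega> $ j \<ge> 0}
                    * sqrt (det (C \<delta>) / lam1 \<delta> ^ CARD('n))))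
         \<le> ereal (Gamma (real CARD('n) / 2) / (2 * pi powr (real CARD('n) / 2) * fact (CARD('n) - 1))
                  * inverse \<bar>\<Prod>j\<in>UNIV. vbar $ j\<bar>)"
proof -
  define K where "K = Gamma (real CARD('n) / 2) / (2 * pi powr (real CARD('n) / 2) * fact (CARD('n) - 1))"
  have ev0: "eventually (\<lambda>\<delta>::real. \<delta> > 0) (at_right 0)" by (simp add: eventually_at_right_less)
  have evj: "eventually (\<lambda>\<delta>. s $ j * v1 \<delta> $ j > 0) (at_right 0)" for j
  proof -
    have "((\<lambda>\<delta>. s $ j * v1 \<delta> $ j) \<longlongrightarrow> s $ j * vbar $ j) (at_right 0)"
      by (intro tendsto_intros lim)
    then show ?thesis using vbar_sign by (auto dest: order_tendstoD(1))
  qed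
  have ev: "eventually (\<lambda>\<delta>. \<delta> > 0 \<and> (\<forall>j. s $ j * v1 \<delta> $ j > 0)) (at_right 0)"
    using ev0 eventually_all_finite[of "\<lambda>(\<delta>::real) (j::'n). s $ j * v1 \<delta> $ j > (0::real)", OF evj]
    by (auto elim: eventually_elim2)
  have le: "eventually (\<lambda>\<delta>. ereal (measure (M \<delta>) {\<omega> \<in> space (M \<delta>). \<forall>j. s $ j * T \<delta> \<omega> $ j \<ge> 0}
                    * sqrt (det (C \<delta>) / lam1 \<delta> ^ CARD('n))) \<le> ereal (K * inverse \<bar>\<Prod>j\<in>UNIV. v1 \<delta> $ j\<bar>)) (at_right 0)"
    using ev
  proof (rule eventually_mono)
    fix \<delta> :: real assume a: "\<delta> > 0 \<and> (\<forall>j. s $ j * v1 \<delta> $ j > 0)"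
    show "ereal (measure (M \<delta>) {\<omega> \<in> space (M \<delta>). \<forall>j. s $ j * T \<delta> \<omega> $ j \<ge> 0}
                    * sqrt (det (C \<delta>) / lam1 \<delta> ^ CARD('n))) \<le> ereal (K * inverse \<bar>\<Prod>j\<in>UNIV. v1 \<delta> $ j\<bar>)"
      unfolding K_def ereal_less_eq
      by (rule per_delta) (use a prob posdef gauss eig in auto)
  qed
  have nz: "\<bar>\<Prod>j\<in>UNIV. vbar $ j\<bar> \<noteq> 0"
    using vbar_sign by (auto simp: prod_zero_iff) (metis mult_zero_right less_irrefl)
  have tl: "((\<lambda>\<delta>. ereal (K * inverse \<bar>\<Prod>j\<in>UNIV. v1 \<delta> $ j\<bar>)) \<longlongrightarrow> ereal (K * inverse \<bar>\<Prod>j\<in>UNIV. vbar $ j\<bar>)) (at_right 0)"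
    unfolding lim_ereal by (intro tendsto_intros lim nz)
  have "Limsup (at_right 0)
           (\<lambda>\<delta>. ereal (measure (M \<delta>) {\<omega> \<in> space (M \<delta>). \<forall>j. s $ j * T \<delta> \<omega> $ j \<ge> 0}
                    * sqrt (det (C \<delta>) / lam1 \<delta> ^ CARD('n))))
       \<le> Limsup (at_right 0) (\<lambda>\<delta>. ereal (K * inverse \<bar>\<Prod>j\<in>UNIV. v1 \<delta> $ j\<bar>))"
    by (rule Limsup_mono[OF le])
  also have "\<dots> = ereal (K * inverse \<bar>\<Prod>j\<in>UNIV. vbar $ j\<bar>)"
    by (rule lim_imp_Limsup[OF _ tl]) simp
  finally show ?thesis unfolding K_def .
qed

end
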